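(* Let $X\in\mathrm{St}(n,k)$ and $\xi=(\xi_1,\xi_2)\in\mathfrak{so}(n)\times\mathfrak{so}(k)$. The initial value problem $$\dot T(t)=-P_X^\perp\circ f_{(e^{t\xi_{1,\mathfrak h}}\xi_{1,\mathfrak p}e^{-t\xi_{1,\mathfrak h}},\ e^{t\xi_{2,\mathfrak h}}\xi_{2,\mathfrak p}e^{-t\xi_{2,\mathfrak h}})}\circ T(t),\qquad T(0)=\mathrm{id}_{N_X\mathrm{St}(n,k)}$$ has the unique solution $T\colon I\to O(N_X\mathrm{St}(n,k))$, $$T(t)=\Phi_{\exp(t\xi_{\mathfrak h})}\circ\exp\!\big(-t(P_X^\perp\circ f_{(\xi_1,\xi_2)})\big).$$
   Context: $\mathrm{St}(n,k)=\{Y\in\mathbb{R}^{n\times k}:Y^\top Y=I_k\}$; $T_X\mathrm{St}(n,k)=\{V:X^\top V+V^\top X=0\}$, $N_X\mathrm{St}(n,k)$ its Frobenius-orthogonal complement, $P_X^\perp(V)=\tfrac12X(X^\top V+V^\top X)$, $f_{(\zeta_1,\zeta_2)}(V)=\zeta_1V-V\zeta_2$, $\Phi_{(R,\theta)}(V)=RV\theta^\top$; $P_X^\perp\circ f_{(\xi_1,\xi_2)}$ is regarded as an endomorphism of $N_X\mathrm{St}(n,k)$, and $O(N_X\mathrm{St}(n,k))$ is its orthogonal group for the Frobenius product. On $\mathfrak{so}(n)\times\mathfrak{so}(k)$ use $\langle(\Omega_1,\Psi_1),(\Omega_2,\Psi_2)\rangle=-\operatorname{tr}(\Omega_1\Omega_2)+2\operatorname{tr}(\Psi_1\Psi_2)$;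 $\mathfrak h=\{(\Omega,\eta):\Omega X=X\eta\}$, $\mathfrak p=\mathfrak h^\perp$, and $\xi_{\mathfrak h}=(\xi_{1,\mathfrak h},\xi_{2,\mathfrak h})$, $\xi_{\mathfrak p}=(\xi_{1,\mathfrak p},\xi_{2,\mathfrak p})$ are the components of $\xi$ in $\mathfrak h\oplus\mathfrak p$; $\exp(t\xi_{\mathfrak h})=(e^{t\xi_{1,\mathfrak h}},e^{t\xi_{2,\mathfrak h}})$. *)

theory Defs
  imports "HOL-Analysis.Analysis"
begin

text \<open>Real n x k matrices are modelled as real^'k^'n (index types 'n, 'k fix the dimensions).
 The Frobenius inner product is the Euclidean inner product on real^'k^'n.\<close>

definition stiefel :: "(real^'k^'n) set" where
  "stiefel = {Y. transpose Y ** Y = mat 1}"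

definition skew :: "real^'m^'m \<Rightarrow> bool" where
  "skew A \<longleftrightarrow> transpose A = - A"

definition tangent_sp :: "real^'k^'n \<Rightarrow> (real^'k^'n) set" where
  "tangent_sp X = {V. transpose X ** V + transpose V ** X = 0}"

definition normal_sp :: "real^'k^'n \<Rightarrow> (real^'k^'n) set" where
  "normal_sp X = {V. \<forall>W\<in>tangent_sp X. V \<bullet> W = 0}"

definition Pperp :: "real^'k^'n \<Rightarrow> real^'k^'n \<Rightarrow> real^'k^'n" where
  "Pperp X V = (1/2) *\<^sub>R (X ** (transpose X ** V + transpose V ** X))"

definition fmap :: "(real^'n^'n) \<times> (real^'k^'k) \<Rightarrow> real^'k^'n \<Rightarrow> real^'k^'n" where
  "fmap z V = fst z ** V - V ** snd z"

definition Phi :: "(real^'n^'n) \<times> (real^'k^'k) \<Rightarrow> real^'k^'n \<Rightarrow> real^'k^'n" where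
  "Phi g V = fst g ** V ** transpose (snd g)"

primrec matpow :: "real^'m^'m \<Rightarrow> nat \<Rightarrow> real^'m^'m" where
  "matpow A 0 = mat 1"
| "matpow A (Suc m) = A ** matpow A m"

definition mexp :: "real^'m^'m \<Rightarrow> real^'m^'m" where
  "mexp A = (\<Sum>m. (1 / fact m) *\<^sub>R matpow A m)"

definition opexp :: "('v::real_normed_vector \<Rightarrow> 'v) \<Rightarrow> 'v \<Rightarrow> 'v" where
  "opexp L V = (\<Sum>m. (1 / fact m) *\<^sub>R (L ^^ m) V)"

definition ipso :: "(real^'n^'n) \<times> (real^'k^'k) \<Rightarrow> (real^'n^'n) \<times> (real^'k^'k) \<Rightarrow> real" where
  "ipso a b = - trace (fst a ** fst b) + 2 * trace (snd a ** snd b)"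

definition hsub :: "real^'k^'n \<Rightarrow> ((real^'n^'n) \<times> (real^'k^'k)) set" where
  "hsub X = {(Om, eta). skew Om \<and> skew eta \<and> Om ** X = X ** eta}"

definition hcomp :: "real^'k^'n \<Rightarrow> (real^'n^'n) \<times> (real^'k^'k) \<Rightarrow> (real^'n^'n) \<times> (real^'k^'k)" where
  "hcomp X xi = (THE eta. eta \<in> hsub X \<and> (\<forall>z\<in>hsub X. ipso (xi - eta) z = 0))"

definition pcomp :: "real^'k^'n \<Rightarrow> (real^'n^'n) \<times> (real^'k^'k) \<Rightarrow> (real^'n^'n) \<times> (real^'k^'k)" where
  "pcomp X xi = xi - hcomp X xi"

definition xit :: "real^'k^'n \<Rightarrow> (real^'n^'n) \<times> (real^'k^'k) \<Rightarrow> real \<Rightarrow> (real^'n^'n) \<times> (real^'k^'k)" where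
  "xit X xi t =
     (mexp (t *\<^sub>R fst (hcomp X xi)) ** fst (pcomp X xi) ** mexp (- t *\<^sub>R fst (hcomp X xi)),
      mexp (t *\<^sub>R snd (hcomp X xi)) ** snd (pcomp X xi) ** mexp (- t *\<^sub>R snd (hcomp X xi)))"

text \<open>T : I \<rightarrow> End(N_X St) solves the IVP (values of T t outside N_X are irrelevant).\<close>
definition is_solution ::
  "real^'k^'n \<Rightarrow> (real^'n^'n) \<times> (real^'k^'k) \<Rightarrow> real set \<Rightarrow> (real \<Rightarrow> real^'k^'n \<Rightarrow> real^'k^'n) \<Rightarrow> bool" where
  "is_solution X xi I T \<longleftrightarrow>
     (\<forall>t\<in>I. \<forall>V\<in>normal_sp X. T t V \<in> normal_sp X) \<and>
     (\<forall>t\<in>I. \<forall>V\<in>normal_sp X. \<forall>W\<in>normal_sp X. \<forall>a b. T t (a *\<^sub>R V + b *\<^sub>R W) = a *\<^sub>R T t V + b *\<^sub>R T t W) \<and>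
     (\<forall>V\<in>normal_sp X. T 0 V = V) \<and>
     (\<forall>t\<in>I. \<forall>V\<in>normal_sp X.
        ((\<lambda>s. T s V) has_vector_derivative (- Pperp X (fmap (xit X xi t) (T t V)))) (at t within I))"

definition in_orth_normal :: "real^'k^'n \<Rightarrow> (real^'k^'n \<Rightarrow> real^'k^'n) \<Rightarrow> bool" where
  "in_orth_normal X L \<longleftrightarrow>
     (\<forall>V\<in>normal_sp X. \<forall>W\<in>normal_sp X. \<forall>a b. L (a *\<^sub>R V + b *\<^sub>R W) = a *\<^sub>R L V + b *\<^sub>R L W) \<and>
     L ` normal_sp X = normal_sp X \<and>
     (\<forall>V\<in>normal_sp X. \<forall>W\<in>normal_sp X. L V \<bullet> L W = V \<bullet> W)"

end

theory Submission
  imports Defs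
begin


lemma bl_pow_bound:
  assumes L: "bounded_linear L" and M: "\<And>n. M (Suc n) = L (M n)"
  obtains K where "K > 0" "\<And>n. norm (M n) \<le> norm (M 0) * K ^ n"
proof -
  obtain K where K: "K > 0" "\<And>x. norm (L x) \<le> norm x * K"
    using bounded_linear.pos_bounded[OF L] by blast
  have "norm (M n) \<le> norm (M 0) * K ^ n" for n
  proof (induction n)
    case 0 then show ?case by simp
  next
    case (Suc n)
    have "norm (M (Suc n)) \<le> norm (M n) * K" using K(2) M by simp
    also have "\<dots> \<le> norm (M 0) * K ^ n * K" using Suc K(1) by (simp add: mult_right_mono)
    finally show ?case by (simp add: algebra_simps)
  qed
  then show ?thesis using K that by blast
qed

lemma ps_summable:
  fixes M :: "nat \<Rightarrow> 'v::banach"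
  assumes "\<And>n. norm (M n) \<le> C * K ^ n"
  shows "summable (\<lambda>n. (t^n / fact n) *\<^sub>R M n)"
proof (rule summable_norm_cancel, rule summable_comparison_test')
  show "summable (\<lambda>n. C * ((\<bar>t\<bar> * K) ^ n / fact n))"
    using summable_exp_generic[of "\<bar>t\<bar> * K"]
    by (intro summable_mult) (simp add: divide_inverse mult.commute)
  fix n :: nat
  have "norm ((t^n / fact n) *\<^sub>R M n) = (\<bar>t\<bar>^n / fact n) * norm (M n)"
    by (simp add: power_abs)
  also have "\<dots> \<le> (\<bar>t\<bar>^n / fact n) * (C * K ^ n)"
    by (intro mult_left_mono assms) auto
  also have "\<dots> = C * ((\<bar>t\<bar> * K) ^ n / fact n)" by (simp add: power_mult_distrib)
  finally show "norm (norm ((t^n / fact n) *\<^sub>R M n)) \<le> C * ((\<bar>t\<bar> * K) ^ n / fact n)" by simp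
qed

lemma ps_deriv:
  fixes M :: "nat \<Rightarrow> 'v::euclidean_space"
  assumes L: "bounded_linear L" and M: "\<And>n. M (Suc n) = L (M n)"
  shows "((\<lambda>t. \<Sum>n. (t^n / fact n) *\<^sub>R M n) has_vector_derivative
           L (\<Sum>n. (t^n / fact n) *\<^sub>R M n)) (at t)"
proof -
  obtain K where K: "K > 0" "\<And>n. norm (M n) \<le> norm (M 0) * K ^ n"
    using bl_pow_bound[of L M, OF L M] by blast
  have sM: "summable (\<lambda>n. (s^n / fact n) *\<^sub>R M n)" for s
    using ps_summable K(2) by blast
  have K1: "norm (M (Suc n)) \<le> (norm (M 0) * K) * K ^ n" for n
    using K(2)[of "Suc n"] by (simp add: algebra_simps)
  have sM1: "summable (\<lambda>n. (s^n / fact n) *\<^sub>R M (Suc n))" for s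
    using ps_summable[OF K1] by blast
  have D: "(\<Sum>n. (t^n / fact n) *\<^sub>R M (Suc n)) = L (\<Sum>n. (t^n / fact n) *\<^sub>R M n)"
    using bounded_linear.suminf[OF L sM[of t]] by (simp add: M linear_scale[OF bounded_linear.linear[OF L]])
  have comp: "(\<lambda>s. (\<Sum>n. (s^n / fact n) *\<^sub>R M n) \<bullet> b) = (\<lambda>s. \<Sum>n. ((M n \<bullet> b) / fact n) * s ^ n)" for b
  proof
    fix s
    show "(\<Sum>n. (s^n / fact n) *\<^sub>R M n) \<bullet> b = (\<Sum>n. ((M n \<bullet> b) / fact n) * s ^ n)"
      using bounded_linear.suminf[OF bounded_linear_inner_left sM[of s], of b]
      by (simp add: field_simps)
  qed
  have "((\<lambda>s. (\<Sum>n. (s^n / fact n) *\<^sub>R M n) \<bullet> b) has_derivative (\<lambda>h. (h *\<^sub>R (\<Sum>n. (t^n / fact n) *\<^sub>R M (Suc n))) \<bullet> b)) (at t)" for b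
  proof -
    let ?c = "\<lambda>n. (M n \<bullet> b) / fact n"
    have sc: "summable (\<lambda>n. ?c n * y ^ n)" for y
      using bounded_linear.summable[OF bounded_linear_inner_left sM[of y], of b]
      by (simp add: field_simps)
    have "((\<lambda>s. \<Sum>n. ?c n * s ^ n) has_field_derivative (\<Sum>n. diffs ?c n * t ^ n)) (at t)"
      by (rule termdiffs_strong_converges_everywhere[OF sc])
    moreover have "(\<Sum>n. diffs ?c n * t ^ n) = (\<Sum>n. (t^n / fact n) *\<^sub>R M (Suc n)) \<bullet> b"
    proof -
      have "diffs ?c n * t ^ n = t ^ n * (M (Suc n) \<bullet> b) / fact n" for n
        unfolding diffs_def by (simp add: field_simps del: of_nat_Suc)
      then have "(\<Sum>n. diffs ?c n * t ^ n) = (\<Sum>n. t ^ n * (M (Suc n) \<bullet> b) / fact n)"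
        by presburger
      also have "\<dots> = (\<Sum>n. (t^n / fact n) *\<^sub>R M (Suc n)) \<bullet> b"
        using bounded_linear.suminf[OF bounded_linear_inner_left sM1[of t], of b]
        by simp
      finally show ?thesis .
    qed
    ultimately have "((\<lambda>s. (\<Sum>n. (s^n / fact n) *\<^sub>R M n) \<bullet> b) has_derivative (*) ((\<Sum>n. (t^n / fact n) *\<^sub>R M (Suc n)) \<bullet> b)) (at t)"
      unfolding comp has_field_derivative_def by simp
    moreover have "(*) ((\<Sum>n. (t^n / fact n) *\<^sub>R M (Suc n)) \<bullet> b) = (\<lambda>h. (h *\<^sub>R (\<Sum>n. (t^n / fact n) *\<^sub>R M (Suc n))) \<bullet> b)"
      by (rule ext) simp
    ultimately show ?thesis by simp
  qed
  then have "((\<lambda>s. \<Sum>n. (s^n / fact n) *\<^sub>R M n) has_derivative (\<lambda>h. h *\<^sub>R (\<Sum>n. (t^n / fact n) *\<^sub>R M (Suc n)))) (at t)"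
    using has_derivative_componentwise_within[where S=UNIV] by blast
  then show ?thesis unfolding has_vector_derivative_def D .
qed


lemma mm_sub_ldistrib: "(A::real^'m^'n) ** (B - C) = A ** B - A ** C"
  by (simp add: matrix_matrix_mult_def vec_eq_iff sum_subtractf right_diff_distrib)
lemma mm_sub_rdistrib: "((A::real^'m^'n) - B) ** C = A ** C - B ** C"
  by (simp add: matrix_matrix_mult_def vec_eq_iff sum_subtractf left_diff_distrib)
lemma mm_add_rdistrib: "((A::real^'m^'n) + B) ** C = A ** C + B ** C"
  by (simp add: matrix_matrix_mult_def vec_eq_iff sum.distrib distrib_right)
lemma mm_neg_left: "(- (A::real^'m^'n)) ** C = - (A ** C)"
  by (simp add: matrix_matrix_mult_def vec_eq_iff sum_negf)
lemma mm_neg_right: "(A::real^'m^'n) ** (- C) = - (A ** C)"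
  by (simp add: matrix_matrix_mult_def vec_eq_iff sum_negf)
lemma mm_scale_left: "(k *\<^sub>R (A::real^'m^'n)) ** C = k *\<^sub>R (A ** C)"
  by (simp add: scalar_matrix_assoc)
lemma mm_scale_right: "(A::real^'m^'n) ** (k *\<^sub>R C) = k *\<^sub>R (A ** C)"
  by (simp add: matrix_matrix_mult_def vec_eq_iff sum_distrib_left mult_ac)
lemma mm_zero_left [simp]: "(0::real^'m^'n) ** C = 0"
  by (simp add: matrix_matrix_mult_def vec_eq_iff)
lemma mm_zero_right [simp]: "(A::real^'m^'n) ** 0 = 0"
  by (simp add: matrix_matrix_mult_def vec_eq_iff)
lemma tr_add: "transpose ((A::real^'m^'n) + B) = transpose A + transpose B"
  by (simp add: transpose_def vec_eq_iff)
lemma tr_sub: "transpose ((A::real^'m^'n) - B) = transpose A - transpose B"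
  by (simp add: transpose_def vec_eq_iff)
lemma tr_neg: "transpose (- (A::real^'m^'n)) = - transpose A"
  by (simp add: transpose_def vec_eq_iff)
lemma tr_zero [simp]: "transpose (0::real^'m^'n) = 0"
  by (simp add: transpose_def vec_eq_iff)

lemmas mmsimps = mm_sub_ldistrib mm_sub_rdistrib mm_add_rdistrib matrix_add_ldistrib
  mm_neg_left mm_neg_right mm_scale_left mm_scale_right matrix_mul_assoc
  tr_add tr_sub tr_neg transpose_scalar matrix_transpose_mul

lemma bl_mm_left: "bounded_linear (\<lambda>B::real^'k^'m. (A::real^'m^'n) ** B)"
  by (subst linear_conv_bounded_linear[symmetric]) (auto intro!: linearI simp: matrix_add_ldistrib mm_scale_right)
lemma bl_mm_right: "bounded_linear (\<lambda>B::real^'m^'n. B ** (A::real^'k^'m))"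
  by (subst linear_conv_bounded_linear[symmetric]) (auto intro!: linearI simp: mm_add_rdistrib mm_scale_left)
lemma bl_tr: "bounded_linear (transpose :: real^'m^'n \<Rightarrow> real^'n^'m)"
  by (subst linear_conv_bounded_linear[symmetric]) (auto intro!: linearI simp: tr_add transpose_scalar)
lemma bb_mm: "bounded_bilinear ((**) :: real^'m^'n \<Rightarrow> real^'k^'m \<Rightarrow> real^'k^'n)"
  by (subst bilinear_conv_bounded_bilinear[symmetric])
     (simp add: bilinear_def bounded_linear.linear[OF bl_mm_left] bounded_linear.linear[OF bl_mm_right])

lemma inner_mm_left: "((A::real^'m^'n) ** B) \<bullet> (C::real^'k^'n) = B \<bullet> (transpose A ** C)"
  unfolding inner_vec_def matrix_matrix_mult_def transpose_def
  by (simp add: sum_distrib_left sum_distrib_right mult_ac sum.swap[of _ "UNIV::'n set"])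
    (subst sum.swap, simp)

lemma inner_mm_right: "((A::real^'m^'n) ** B) \<bullet> (C::real^'k^'n) = A \<bullet> (C ** transpose B)"
  unfolding inner_vec_def matrix_matrix_mult_def transpose_def
  by (simp add: sum_distrib_left sum_distrib_right mult_ac)
    (subst sum.swap, simp)

lemma trace_tr_mm: "trace (transpose (A::real^'m^'n) ** B) = A \<bullet> B"
  unfolding inner_vec_def matrix_matrix_mult_def transpose_def trace_def
  by simp (subst sum.swap, simp)

lemma inner_tr: "transpose (A::real^'m^'n) \<bullet> transpose B = A \<bullet> B"
  unfolding inner_vec_def transpose_def
  by simp (subst sum.swap, simp)


lemma ps_summable_L:
  fixes M :: "nat \<Rightarrow> 'v::banach"
  assumes L: "bounded_linear L" and M: "\<And>n. M (Suc n) = L (M n)"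
  shows "summable (\<lambda>n. (t^n / fact n) *\<^sub>R M n)"
proof -
  obtain K where K: "K > 0" "\<And>n. norm (M n) \<le> norm (M 0) * K ^ n"
    using bl_pow_bound[of L M, OF L M] by blast
  then show ?thesis using ps_summable by blast
qed

lemma ps_zero: "(\<Sum>n. ((0::real)^n / fact n) *\<^sub>R (M n :: 'v::real_normed_vector)) = M 0"
proof -
  have "(\<Sum>n. ((0::real)^n / fact n) *\<^sub>R M n) = (\<Sum>n<1. ((0::real)^n / fact n) *\<^sub>R M n)"
    by (rule suminf_finite) auto
  then show ?thesis by simp
qed

lemma ps_lin:
  fixes M :: "nat \<Rightarrow> 'v::banach"
  assumes F: "bounded_linear F" and s: "summable (\<lambda>n. (c n :: real) *\<^sub>R M n)"
  shows "F (\<Sum>n. c n *\<^sub>R M n) = (\<Sum>n. c n *\<^sub>R F (M n))"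
  using bounded_linear.suminf[OF F s] by (simp add: linear_scale[OF bounded_linear.linear[OF F]])

lemma matpow_scale: "matpow (t *\<^sub>R (A::real^'m^'m)) n = t^n *\<^sub>R matpow A n"
  by (induction n) (simp_all add: mm_scale_left mm_scale_right)

lemma matpow_comm: "A ** matpow A n = matpow A n ** (A::real^'m^'m)"
  by (induction n) (simp_all add: matrix_mul_assoc)

lemma mexp_series: "mexp (t *\<^sub>R (A::real^'m^'m)) = (\<Sum>n. (t^n / fact n) *\<^sub>R matpow A n)"
  unfolding mexp_def matpow_scale by (simp add: divide_inverse mult.commute)

lemma mexp_summable: "summable (\<lambda>n. (t^n / fact n) *\<^sub>R matpow (A::real^'m^'m) n)"
  by (rule ps_summable_L[OF bl_mm_left]) simp

lemma mexp_deriv: "((\<lambda>t. mexp (t *\<^sub>R (A::real^'m^'m))) has_vector_derivative A ** mexp (t *\<^sub>R A)) (at t within S)"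
  unfolding mexp_series
  by (rule has_vector_derivative_at_within, rule ps_deriv[OF bl_mm_left]) simp

lemma mexp_comm: "A ** mexp (t *\<^sub>R A) = mexp (t *\<^sub>R (A::real^'m^'m)) ** A"
  unfolding mexp_series
  by (simp add: ps_lin[OF bl_mm_left mexp_summable] ps_lin[OF bl_mm_right mexp_summable] matpow_comm)

lemma mexp_zero [simp]: "mexp (0 *\<^sub>R (A::real^'m^'m)) = mat 1"
  unfolding mexp_series ps_zero by simp

lemma mexp_zero0 [simp]: "mexp (0::real^'m^'m) = mat 1"
  by (metis mexp_zero scale_zero_left)

lemma mexp_inv: "mexp (t *\<^sub>R A) ** mexp ((- t) *\<^sub>R (A::real^'m^'m)) = mat 1"
proof -
  let ?F = "\<lambda>t. mexp (t *\<^sub>R A) ** mexp (t *\<^sub>R (- A))"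
  have "\<exists>c. \<forall>x\<in>UNIV. ?F x = c"
  proof (rule has_derivative_zero_constant)
    fix x :: real
    have "(?F has_vector_derivative (mexp (x *\<^sub>R A) ** ((- A) ** mexp (x *\<^sub>R (- A))) + (A ** mexp (x *\<^sub>R A)) ** mexp (x *\<^sub>R (- A)))) (at x within UNIV)"
      by (rule bounded_bilinear.has_vector_derivative[OF bb_mm mexp_deriv mexp_deriv])
    moreover have "mexp (x *\<^sub>R A) ** ((- A) ** mexp (x *\<^sub>R (- A))) + (A ** mexp (x *\<^sub>R A)) ** mexp (x *\<^sub>R (- A)) = 0"
      by (simp add: mm_neg_left mm_neg_right matrix_mul_assoc mexp_comm)
    ultimately show "(?F has_derivative (\<lambda>h. 0)) (at x within UNIV)"
      by (simp add: has_vector_derivative_def)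
  qed simp
  then obtain c where "\<And>x. ?F x = c" by blast
  from this[of t] this[of 0] show ?thesis by simp
qed

lemma mexp_inv': "mexp ((- t) *\<^sub>R A) ** mexp (t *\<^sub>R (A::real^'m^'m)) = mat 1"
  using mexp_inv[of "-t" A] by simp

lemma matpow_tr: "transpose (matpow A n) = matpow (transpose A) n"
  by (induction n) (simp_all add: matrix_transpose_mul matpow_comm)

lemma mexp_tr: "transpose (mexp (t *\<^sub>R (A::real^'m^'m))) = mexp (t *\<^sub>R transpose A)"
  unfolding mexp_series
  by (simp add: ps_lin[OF bl_tr mexp_summable] transpose_scalar matpow_tr)

lemma mexp_skew_tr: "skew A \<Longrightarrow> transpose (mexp (t *\<^sub>R (A::real^'m^'m))) = mexp ((- t) *\<^sub>R A)"
  unfolding mexp_tr skew_def by simp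

lemma matpow_intertw: "A ** X = X ** B \<Longrightarrow> matpow A n ** X = X ** matpow B n"
  by (induction n) (simp_all, metis matrix_mul_assoc)

lemma mexp_intertw: "A ** X = X ** B \<Longrightarrow> mexp (t *\<^sub>R A) ** X = X ** mexp (t *\<^sub>R B)"
  unfolding mexp_series
  by (simp add: ps_lin[OF bl_mm_left mexp_summable] ps_lin[OF bl_mm_right mexp_summable] matpow_intertw)


lemma funpow_scale:
  assumes "linear (K :: 'v::real_vector \<Rightarrow> 'v)"
  shows "((\<lambda>W. t *\<^sub>R K W) ^^ n) V = t^n *\<^sub>R (K ^^ n) V"
  by (induction n) (simp_all add: funpow.simps linear_scale[OF assms])

lemma funpow_lin:
  assumes "linear (K :: 'v::real_vector \<Rightarrow> 'v)"
  shows "(K ^^ n) (a *\<^sub>R V + b *\<^sub>R W) = a *\<^sub>R (K ^^ n) V + b *\<^sub>R (K ^^ n) W"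
  by (induction n) (simp_all add: funpow.simps linear_add[OF assms] linear_scale[OF assms])

context
  fixes K :: "'v::euclidean_space \<Rightarrow> 'v"
  assumes K: "linear K"
begin

lemma blK: "bounded_linear K" using K linear_conv_bounded_linear by blast

lemma opexp_series: "opexp (\<lambda>W. t *\<^sub>R K W) V = (\<Sum>n. (t^n / fact n) *\<^sub>R (K ^^ n) V)"
  unfolding opexp_def funpow_scale[OF K] by (simp add: divide_inverse mult.commute)

lemma opexp_summable: "summable (\<lambda>n. (t^n / fact n) *\<^sub>R (K ^^ n) V)"
  by (rule ps_summable_L[OF blK]) simp

lemma opexp_deriv: "((\<lambda>t. opexp (\<lambda>W. t *\<^sub>R K W) V) has_vector_derivative K (opexp (\<lambda>W. t *\<^sub>R K W) V)) (at t within S)"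
  unfolding opexp_series
  by (rule has_vector_derivative_at_within, rule ps_deriv[OF blK]) simp

lemma opexp_zero: "opexp (\<lambda>W. 0 *\<^sub>R K W) V = V"
  unfolding opexp_series ps_zero by simp

lemma opexp_lin: "opexp (\<lambda>W. t *\<^sub>R K W) (a *\<^sub>R V + b *\<^sub>R W) = a *\<^sub>R opexp (\<lambda>W. t *\<^sub>R K W) V + b *\<^sub>R opexp (\<lambda>W. t *\<^sub>R K W) W"
proof -
  have "(\<lambda>n. (t^n / fact n) *\<^sub>R (K ^^ n) (a *\<^sub>R V + b *\<^sub>R W)) sums
        (a *\<^sub>R (\<Sum>n. (t^n / fact n) *\<^sub>R (K ^^ n) V) + b *\<^sub>R (\<Sum>n. (t^n / fact n) *\<^sub>R (K ^^ n) W))"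
    unfolding funpow_lin[OF K]
    using sums_add[OF sums_scaleR_right[OF summable_sums[OF opexp_summable[of t V]], of a]
                      sums_scaleR_right[OF summable_sums[OF opexp_summable[of t W]], of b]]
    by (simp add: scaleR_right_distrib mult.commute)
  then show ?thesis unfolding opexp_series by (rule sums_unique[symmetric])
qed

lemma opexp_proj:
  assumes P: "bounded_linear Pm" and PK: "\<And>U. Pm (K U) = K U" and PV: "Pm V = V"
  shows "Pm (opexp (\<lambda>W. t *\<^sub>R K W) V) = opexp (\<lambda>W. t *\<^sub>R K W) V"
proof -
  have "Pm ((K ^^ n) V) = (K ^^ n) V" for n
    by (cases n) (simp_all add: PV PK)
  then show ?thesis unfolding opexp_series ps_lin[OF P opexp_summable] by simp
qed

end


lemma bl_Pperp: "bounded_linear (Pperp (X::real^'k^'n))"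
  unfolding Pperp_def
  by (subst linear_conv_bounded_linear[symmetric])
     (auto intro!: linearI simp: mmsimps algebra_simps)

lemma linear_fmap: "linear (fmap z :: real^'k^'n \<Rightarrow> _)"
  unfolding fmap_def by (auto intro!: linearI simp: mmsimps algebra_simps)

lemma P_adj: "Pperp (X::real^'k^'n) U \<bullet> W = U \<bullet> Pperp X W"
proof -
  have a: "(X ** (transpose X ** U)) \<bullet> W = U \<bullet> (X ** (transpose X ** W))"
    using inner_mm_left[of X "transpose X ** U" W] inner_mm_left[of X "transpose X ** W" U]
    by (simp add: inner_commute)
  have b: "(X ** (transpose U ** X)) \<bullet> W = U \<bullet> (X ** (transpose W ** X))"
  proof -
    have "(X ** (transpose U ** X)) \<bullet> W = (transpose U ** X) \<bullet> (transpose X ** W)"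
      by (simp add: inner_mm_left)
    also have "\<dots> = transpose (transpose U ** X) \<bullet> transpose (transpose X ** W)"
      by (simp add: inner_tr)
    also have "\<dots> = (transpose X ** U) \<bullet> (transpose W ** X)"
      by (simp add: matrix_transpose_mul)
    also have "\<dots> = U \<bullet> (X ** (transpose W ** X))"
      using inner_mm_left[of X "transpose W ** X" U] by (simp add: inner_commute)
    finally show ?thesis .
  qed
  show ?thesis unfolding Pperp_def
    by (simp add: matrix_add_ldistrib inner_add_left inner_add_right a b)
qed

lemma P_tangent: "W \<in> tangent_sp X \<Longrightarrow> Pperp X W = 0"
  unfolding tangent_sp_def Pperp_def by simp

lemma P_in_normal: "Pperp X U \<in> normal_sp X"
  unfolding normal_sp_def by (auto simp: P_adj P_tangent)

lemma normal_diff: "V \<in> normal_sp X \<Longrightarrow> W \<in> normal_sp X \<Longrightarrow> V - W \<in> normal_sp X"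
  unfolding normal_sp_def by (auto simp: inner_diff_left)

lemma normal_lin: "V \<in> normal_sp X \<Longrightarrow> W \<in> normal_sp X \<Longrightarrow> a *\<^sub>R V + b *\<^sub>R W \<in> normal_sp X"
  unfolding normal_sp_def by (auto simp: inner_add_left)

lemma normal_P:
  assumes X: "X \<in> stiefel" and V: "V \<in> normal_sp (X::real^'k^'n)"
  shows "Pperp X V = V"
proof -
  have XX: "transpose X ** X = mat 1" using X unfolding stiefel_def by simp
  let ?M = "transpose X ** V + transpose V ** X"
  have tM: "transpose ?M = ?M" by (simp add: mmsimps add.commute)
  have "V - Pperp X V \<in> tangent_sp X"
  proof -
    have "transpose X ** Pperp X V = (1/2) *\<^sub>R ?M"
      unfolding Pperp_def by (simp add: mmsimps XX)
    moreover have "transpose (Pperp X V) ** X = (1/2) *\<^sub>R ?M"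
      unfolding Pperp_def by (simp only: transpose_scalar mm_scale_left matrix_transpose_mul tM
          flip: matrix_mul_assoc) (simp add: XX)
    ultimately show ?thesis unfolding tangent_sp_def
      by (simp add: mmsimps algebra_simps scaleR_2[symmetric] flip: scaleR_add_left)
  qed
  moreover have "V - Pperp X V \<in> normal_sp X" by (rule normal_diff[OF V P_in_normal])
  ultimately have "(V - Pperp X V) \<bullet> (V - Pperp X V) = 0" unfolding normal_sp_def by blast
  then show ?thesis by simp
qed

lemma normal_iff: "X \<in> stiefel \<Longrightarrow> V \<in> normal_sp X \<longleftrightarrow> Pperp X V = V"
  using normal_P P_in_normal by metis

lemma fmap_skew:
  assumes "skew (fst z)" "skew (snd z)"
  shows "fmap z U \<bullet> W = - (U \<bullet> fmap z (W::real^'k^'n))"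
proof -
  have "(fst z ** U) \<bullet> W = - (U \<bullet> (fst z ** W))"
    using assms(1) by (simp add: inner_mm_left skew_def mm_neg_left)
  moreover have "(U ** snd z) \<bullet> W = - (U \<bullet> (W ** snd z))"
    using assms(2) by (simp add: inner_mm_right skew_def mm_neg_right)
  ultimately show ?thesis unfolding fmap_def by (simp add: inner_diff_left inner_diff_right)
qed

lemma Pf_skew:
  assumes X: "X \<in> stiefel" and z: "skew (fst z)" "skew (snd z)"
    and V: "V \<in> normal_sp X" and W: "W \<in> normal_sp X"
  shows "Pperp X (fmap z V) \<bullet> W = - (V \<bullet> Pperp X (fmap z W))"
proof -
  have "Pperp X (fmap z V) \<bullet> W = fmap z V \<bullet> W" using P_adj normal_P[OF X W] by metis
  also have "\<dots> = - (V \<bullet> fmap z W)" by (rule fmap_skew[OF z])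
  also have "V \<bullet> fmap z W = V \<bullet> Pperp X (fmap z W)"
    using P_adj normal_P[OF X V] by metis
  finally show ?thesis .
qed

lemma Pf_zero:
  assumes X: "X \<in> stiefel" and z: "skew (fst z)" "skew (snd z)" and V: "V \<in> normal_sp X"
  shows "V \<bullet> Pperp X (fmap z V) = 0"
  using Pf_skew[OF X z V V] by (simp add: inner_commute)


lemma diff3: "(a::'a::ab_group_add) - e - (a - c) = c - e" by (simp add: algebra_simps)

lemma trace_skew: "skew (A::real^'m^'m) \<Longrightarrow> trace (A ** B) = - (A \<bullet> B)"
  using trace_tr_mm[of A B] unfolding skew_def by (simp add: mm_neg_left trace_def sum_negf)

lemma ipso_skew: "skew (fst a) \<Longrightarrow> skew (snd a) \<Longrightarrow> ipso a b = fst a \<bullet> fst b - 2 * (snd a \<bullet> snd b)"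
  unfolding ipso_def by (simp add: trace_skew)

lemma ipso_diff: "ipso (a - b) z = ipso a z - ipso b z"
  unfolding ipso_def by (simp add: mm_sub_rdistrib trace_sub algebra_simps)

lemma skew_diff: "skew A \<Longrightarrow> skew B \<Longrightarrow> skew (A - (B::real^'m^'m))"
  unfolding skew_def by (simp add: tr_sub)

lemma skew_conj: "skew A \<Longrightarrow> skew ((X::real^'k^'n) ** A ** transpose X)"
  unfolding skew_def by (simp add: matrix_transpose_mul mm_neg_left mm_neg_right matrix_mul_assoc)

lemma hsub_diff: "a \<in> hsub X \<Longrightarrow> b \<in> hsub X \<Longrightarrow> a - b \<in> hsub X"
  unfolding hsub_def by (auto simp: skew_diff mm_sub_rdistrib mm_sub_ldistrib)

context
  fixes X :: "real^'k^'n" and xi1 :: "real^'n^'n" and xi2 :: "real^'k^'k"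
  assumes X: "X \<in> stiefel" and s1: "skew xi1" and s2: "skew xi2"
begin

lemma XX: "transpose X ** X = mat 1" using X unfolding stiefel_def by simp
lemma XXr: "transpose X ** (X ** C) = C" by (simp add: matrix_mul_assoc XX)
lemma XXe: "C ** (transpose X ** X) = C" by (simp add: XX)

lemma hsub_XT:
  assumes "(A, B) \<in> hsub X"
  shows "transpose X ** A = B ** transpose X" "transpose X ** A ** X = B"
proof -
  have h: "skew A" "skew B" "A ** X = X ** B" using assms unfolding hsub_def by auto
  have "transpose X ** A = transpose (transpose A ** X)" by (simp add: matrix_transpose_mul)
  also have "\<dots> = transpose (- (X ** B))" using h unfolding skew_def by (simp add: mm_neg_left)
  also have "\<dots> = B ** transpose X" using h(2) unfolding skew_def by (simp add: tr_neg matrix_transpose_mul mm_neg_left)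
  finally show 1: "transpose X ** A = B ** transpose X" .
  show "transpose X ** A ** X = B" by (simp add: 1 XX flip: matrix_mul_assoc)
qed

definition "eta0 = 2 *\<^sub>R xi2 - transpose X ** xi1 ** X"
definition "Om0 = xi1 - X ** transpose X ** xi1 - xi1 ** X ** transpose X
   + X ** transpose X ** xi1 ** X ** transpose X + X ** eta0 ** transpose X"

lemma eta0_skew: "skew eta0"
  using s1 s2 unfolding eta0_def skew_def
  by (simp add: tr_sub transpose_scalar matrix_transpose_mul matrix_mul_assoc mm_neg_left mm_neg_right)

lemma Om0_skew: "skew Om0"
  using s1 eta0_skew unfolding Om0_def skew_def
  by (simp add: tr_sub tr_add transpose_scalar matrix_transpose_mul matrix_mul_assoc mm_neg_left mm_neg_right)

lemma Om0_X: "Om0 ** X = X ** eta0"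
  unfolding Om0_def
  by (simp add: mm_sub_rdistrib mm_add_rdistrib XXr XXe flip: matrix_mul_assoc)

lemma h0: "(Om0, eta0) \<in> hsub X"
  unfolding hsub_def using Om0_skew eta0_skew Om0_X by simp

lemma h0_orth:
  assumes z: "z \<in> hsub X"
  shows "ipso ((xi1, xi2) - (Om0, eta0)) z = 0"
proof -
  obtain A B where zAB: "z = (A, B)" by (cases z)
  with z have AB: "(A, B) \<in> hsub X" by simp
  note T = hsub_XT[OF AB]
  let ?C = "transpose X ** xi1 ** X"
  have t1: "(X ** transpose X ** xi1) \<bullet> A = ?C \<bullet> B"
  proof -
    have "(X ** transpose X ** xi1) \<bullet> A = (transpose X ** xi1) \<bullet> (transpose X ** A)"
      by (simp add: inner_mm_left flip: matrix_mul_assoc)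
    also have "\<dots> = (transpose X ** xi1) \<bullet> (B ** transpose X)" by (simp add: T)
    also have "\<dots> = ?C \<bullet> B" by (simp add: inner_mm_right)
    finally show ?thesis .
  qed
  have t2: "(xi1 ** X ** transpose X) \<bullet> A = ?C \<bullet> B"
  proof -
    have "(xi1 ** X ** transpose X) \<bullet> A = (xi1 ** X) \<bullet> (A ** X)"
      by (simp add: inner_mm_right)
    also have "\<dots> = (xi1 ** X) \<bullet> (X ** B)" using AB unfolding hsub_def by simp
    also have "\<dots> = (X ** B) \<bullet> (xi1 ** X)" by (simp add: inner_commute)
    also have "\<dots> = B \<bullet> ?C" by (simp add: inner_mm_left matrix_mul_assoc)
    finally show ?thesis by (simp add: inner_commute)
  qed
  have t3: "(X ** M ** transpose X) \<bullet> A = M \<bullet> B" for M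
  proof -
    have "(X ** M ** transpose X) \<bullet> A = (X ** M) \<bullet> (A ** X)" by (simp add: inner_mm_right)
    also have "\<dots> = M \<bullet> (transpose X ** A ** X)" by (simp add: inner_mm_left matrix_mul_assoc)
    moreover have "B ** transpose X ** X = B" by (simp add: XXe flip: matrix_mul_assoc)
    ultimately show ?thesis by (simp add: T)
  qed
  have t3': "(X ** transpose X ** xi1 ** X ** transpose X) \<bullet> A = ?C \<bullet> B"
    using t3[of ?C] by (simp add: matrix_mul_assoc)
  have sk: "skew (fst ((xi1, xi2) - (Om0, eta0)))" "skew (snd ((xi1, xi2) - (Om0, eta0)))"
    using skew_diff[OF s1 Om0_skew] skew_diff[OF s2 eta0_skew] by simp_all
  have e: "xi1 - Om0 = X ** transpose X ** xi1 + xi1 ** X ** transpose X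
      - X ** transpose X ** xi1 ** X ** transpose X - X ** eta0 ** transpose X"
    unfolding Om0_def by (simp add: algebra_simps)
  show ?thesis
  proof -
    have e0: "eta0 \<bullet> B = 2 * (xi2 \<bullet> B) - ?C \<bullet> B"
      unfolding eta0_def by (simp add: inner_diff_left)
    have r1: "(xi1 - Om0) \<bullet> A = ?C \<bullet> B - eta0 \<bullet> B"
      unfolding e inner_diff_left inner_add_left t1 t2 t3' t3 by simp
    have r2: "(xi2 - eta0) \<bullet> B = xi2 \<bullet> B - eta0 \<bullet> B"
      by (simp add: inner_diff_left)
    show ?thesis unfolding zAB ipso_skew[OF sk] using r1 r2 e0 by simp
  qed
qed

lemma h_unique:
  assumes e: "eta \<in> hsub X" "\<forall>z\<in>hsub X. ipso ((xi1, xi2) - eta) z = 0"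
  shows "eta = (Om0, eta0)"
proof -
  define d where "d = (Om0, eta0) - eta"
  obtain D \<delta> where dD: "d = (D, \<delta>)" by (cases d)
  have dh: "(D, \<delta>) \<in> hsub X" using hsub_diff[OF h0 e(1)] dD d_def by simp
  then have hD: "skew D" "skew \<delta>" "D ** X = X ** \<delta>" unfolding hsub_def by auto
  have dz: "ipso (D, \<delta>) z = 0" if "z \<in> hsub X" for z
  proof -
    have "(D, \<delta>) = ((xi1, xi2) - eta) - ((xi1, xi2) - (Om0, eta0))" using dD d_def
      by (simp only: diff3 d_def[symmetric] dD)
    then have "ipso (D, \<delta>) z = ipso ((xi1, xi2) - eta) z - ipso ((xi1, xi2) - (Om0, eta0)) z"
      by (simp only: ipso_diff)
    then show ?thesis using e(2) h0_orth[OF that] that by simp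
  qed
  define Dp where "Dp = D - X ** \<delta> ** transpose X"
  have Dp_X: "Dp ** X = 0" unfolding Dp_def using hD(3) by (simp add: mm_sub_rdistrib XXr XXe flip: matrix_mul_assoc)
  define z1 where "z1 = X ** \<delta> ** transpose X - Dp"
  have Dps: "skew Dp" unfolding Dp_def by (rule skew_diff[OF hD(1) skew_conj[OF hD(2)]])
  have z1s: "skew z1" unfolding z1_def by (rule skew_diff[OF skew_conj[OF hD(2)] Dps])
  have z1X: "z1 ** X = X ** \<delta>" unfolding z1_def
    using Dp_X by (simp add: mm_sub_rdistrib XXr XXe flip: matrix_mul_assoc)
  have "(z1, \<delta>) \<in> hsub X"
    unfolding hsub_def using z1s z1X hD(2) by simp
  from dz[OF this] have "D \<bullet> z1 - 2 * (\<delta> \<bullet> \<delta>) = 0"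
    using ipso_skew[of "(D, \<delta>)" "(z1, \<delta>)"] hD by simp
  moreover have "D = X ** \<delta> ** transpose X + Dp" unfolding Dp_def by simp
  moreover have "(X ** \<delta> ** transpose X) \<bullet> (X ** \<delta> ** transpose X) = \<delta> \<bullet> \<delta>"
  proof -
    have "(X ** \<delta> ** transpose X) \<bullet> (X ** \<delta> ** transpose X) = (X ** \<delta>) \<bullet> (X ** \<delta> ** transpose X ** X)"
      by (simp add: inner_mm_right)
    also have "\<dots> = \<delta> \<bullet> (transpose X ** (X ** \<delta> ** transpose X ** X))"
      by (simp add: inner_mm_left)
    also have "\<dots> = \<delta> \<bullet> \<delta>" by (simp add: XXr XXe flip: matrix_mul_assoc)
    finally show ?thesis .
  qed
  ultimately have "- (\<delta> \<bullet> \<delta>) - Dp \<bullet> Dp = 0"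
  proof -
    have c: "Dp \<bullet> (X ** \<delta> ** transpose X) = (X ** \<delta> ** transpose X) \<bullet> Dp" by (rule inner_commute)
    assume a: "D \<bullet> z1 - 2 * (\<delta> \<bullet> \<delta>) = 0" "D = X ** \<delta> ** transpose X + Dp"
      "(X ** \<delta> ** transpose X) \<bullet> (X ** \<delta> ** transpose X) = \<delta> \<bullet> \<delta>"
    have "D \<bullet> z1 = \<delta> \<bullet> \<delta> - Dp \<bullet> Dp"
      unfolding z1_def a(2) inner_add_left inner_diff_right a(3) c by simp
    then show ?thesis using a(1) by simp
  qed
  moreover have "0 \<le> \<delta> \<bullet> \<delta>" "0 \<le> Dp \<bullet> Dp" by simp_all
  ultimately have "\<delta> \<bullet> \<delta> = 0" "Dp \<bullet> Dp = 0" by linarith+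
  then have "\<delta> = 0" "Dp = 0" by simp_all
  then have "D = 0" unfolding Dp_def by simp
  with \<open>\<delta> = 0\<close> have "d = 0" using dD by (simp add: zero_prod_def)
  then show ?thesis unfolding d_def by simp
qed

lemma hcomp_in: "hcomp X (xi1, xi2) \<in> hsub X"
proof -
  have "\<exists>!eta. eta \<in> hsub X \<and> (\<forall>z\<in>hsub X. ipso ((xi1, xi2) - eta) z = 0)"
    using h0 h0_orth h_unique by blast
  from theI'[OF this] show ?thesis unfolding hcomp_def by blast
qed

end


lemma fmap_add: "fmap (a + b) U = fmap a U + fmap b (U::real^'k^'n)"
  unfolding fmap_def by (simp add: mm_add_rdistrib matrix_add_ldistrib algebra_simps)

lemma fmap_diffV: "fmap z (U - W) = fmap z U - fmap z (W::real^'k^'n)"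
  unfolding fmap_def by (simp add: mm_sub_rdistrib mm_sub_ldistrib algebra_simps)

lemma P_diff: "Pperp X (U - W) = Pperp X U - Pperp X (W::real^'k^'n)"
  using linear_diff[OF bounded_linear.linear[OF bl_Pperp]] by blast

lemma P_neg: "Pperp X (- U) = - Pperp X (U::real^'k^'n)"
  using linear_neg[OF bounded_linear.linear[OF bl_Pperp]] by blast

lemma P_add: "Pperp X (U + W) = Pperp X U + Pperp X (W::real^'k^'n)"
  using linear_add[OF bounded_linear.linear[OF bl_Pperp]] by blast

lemma ode_unique:
  fixes X :: "real^'k^'n"
  assumes X: "X \<in> stiefel" and I: "convex I" and t0: "t0 \<in> I"
    and N: "\<And>s. s \<in> I \<Longrightarrow> y s \<in> normal_sp X \<and> z s \<in> normal_sp X"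
    and Z: "\<And>s. s \<in> I \<Longrightarrow> skew (fst (Z s)) \<and> skew (snd (Z s))"
    and dy: "\<And>s. s \<in> I \<Longrightarrow> (y has_vector_derivative - Pperp X (fmap (Z s) (y s))) (at s within I)"
    and dz: "\<And>s. s \<in> I \<Longrightarrow> (z has_vector_derivative - Pperp X (fmap (Z s) (z s))) (at s within I)"
    and e0: "y t0 = z t0"
  shows "\<And>s. s \<in> I \<Longrightarrow> y s = z s"
proof -
  let ?h = "\<lambda>s. (y s - z s) \<bullet> (y s - z s)"
  have "\<exists>c. \<forall>s\<in>I. ?h s = c"
  proof (rule has_derivative_zero_constant[OF I])
    fix s assume s: "s \<in> I"
    let ?d = "y s - z s"
    have dd: "((\<lambda>s. y s - z s) has_vector_derivative - Pperp X (fmap (Z s) ?d)) (at s within I)"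
      using has_vector_derivative_diff[OF dy[OF s] dz[OF s]] by (simp add: fmap_diffV P_diff)
    have dN: "?d \<in> normal_sp X" using N[OF s] normal_diff by blast
    have "(?h has_vector_derivative (?d \<bullet> (- Pperp X (fmap (Z s) ?d)) + (- Pperp X (fmap (Z s) ?d)) \<bullet> ?d)) (at s within I)"
      by (rule bounded_bilinear.has_vector_derivative[OF bounded_bilinear_inner dd dd])
    moreover have "?d \<bullet> (- Pperp X (fmap (Z s) ?d)) + (- Pperp X (fmap (Z s) ?d)) \<bullet> ?d = 0"
      using Pf_zero[OF X _ _ dN, of "Z s"] Z[OF s] by (simp add: inner_commute[of _ ?d])
    ultimately show "(?h has_derivative (\<lambda>h. 0)) (at s within I)"
      by (simp add: has_vector_derivative_def)
  qed
  then obtain c where c: "\<And>s. s \<in> I \<Longrightarrow> ?h s = c" by blast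
  fix s assume s: "s \<in> I"
  have "?h s = ?h t0" using c[OF s] c[OF t0] by simp
  then show "y s = z s" using e0 by simp
qed


context
  fixes X :: "real^'k^'n" and xi1 :: "real^'n^'n" and xi2 :: "real^'k^'k"
  assumes X: "X \<in> stiefel" and s1: "skew xi1" and s2: "skew xi2"
begin

definition "Om = fst (hcomp X (xi1, xi2))"
definition "Et = snd (hcomp X (xi1, xi2))"
definition "G1 t = mexp (t *\<^sub>R Om)"
definition "G2 t = mexp (t *\<^sub>R Et)"

lemma hc: "skew Om" "skew Et" "Om ** X = X ** Et"
  using hcomp_in[OF X s1 s2] unfolding hsub_def Om_def Et_def by auto

lemma XX': "transpose X ** X = mat 1" using X unfolding stiefel_def by simp

lemma G2T: "transpose (G2 t) = G2 (- t)"
  unfolding G2_def using mexp_skew_tr[OF hc(2)] by simp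
lemma G1T: "transpose (G1 t) = G1 (- t)"
  unfolding G1_def using mexp_skew_tr[OF hc(1)] by simp
lemma G1inv: "G1 t ** G1 (- t) = mat 1" "G1 (- t) ** G1 t = mat 1"
  unfolding G1_def using mexp_inv mexp_inv' by auto
lemma G2inv: "G2 t ** G2 (- t) = mat 1" "G2 (- t) ** G2 t = mat 1"
  unfolding G2_def using mexp_inv mexp_inv' by auto
lemma G1X: "G1 t ** X = X ** G2 t"
  unfolding G1_def G2_def by (rule mexp_intertw[OF hc(3)])
lemma XG1: "transpose X ** G1 t = G2 t ** transpose X"
proof -
  have "transpose X ** G1 t = transpose (transpose (G1 t) ** X)" by (simp add: matrix_transpose_mul)
  also have "\<dots> = transpose (X ** G2 (- t))" by (simp add: G1T G1X)
  also have "\<dots> = G2 t ** transpose X" by (simp add: matrix_transpose_mul G2T)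
  finally show ?thesis .
qed

lemma G1Xr: "G1 t ** (X ** C) = X ** (G2 t ** C)" by (simp add: matrix_mul_assoc G1X)
lemma XG1r: "transpose X ** (G1 t ** C) = G2 t ** (transpose X ** C)" by (simp add: matrix_mul_assoc XG1)
lemma G1invr: "G1 t ** (G1 (- t) ** C) = C" "G1 (- t) ** (G1 t ** C) = C"
  by (simp_all add: matrix_mul_assoc G1inv)
lemma G2invr: "G2 t ** (G2 (- t) ** C) = C" "G2 (- t) ** (G2 t ** C) = C"
  by (simp_all add: matrix_mul_assoc G2inv)

definition "Ph t V = G1 t ** V ** transpose (G2 t)"

lemma Ph_eq: "Phi (G1 t, G2 t) V = Ph t V" unfolding Phi_def Ph_def by simp

lemma Ph_P: "Ph t (Pperp X U) = Pperp X (Ph t U)"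
proof -
  have a: "transpose X ** (G1 t ** (U ** G2 (- t))) = G2 t ** ((transpose X ** U) ** G2 (- t))"
    by (simp add: XG1r flip: matrix_mul_assoc)
  have b: "transpose (G1 t ** (U ** G2 (- t))) ** X = G2 t ** ((transpose U ** X) ** G2 (- t))"
  proof -
    have "transpose (G1 t ** (U ** G2 (- t))) ** X = G2 t ** (transpose U ** (G1 (- t) ** X))"
      by (simp add: matrix_transpose_mul G1T G2T flip: matrix_mul_assoc)
    also have "\<dots> = G2 t ** ((transpose U ** X) ** G2 (- t))"
      by (simp add: G1X flip: matrix_mul_assoc)
    finally show ?thesis .
  qed
  show ?thesis
    unfolding Ph_def Pperp_def G2T
    by (simp add: mm_scale_left mm_scale_right flip: matrix_mul_assoc)
       (simp add: a b matrix_add_ldistrib mm_add_rdistrib G1Xr flip: matrix_mul_assoc)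
qed

lemma Ph_N: "V \<in> normal_sp X \<Longrightarrow> Ph t V \<in> normal_sp X"
  using normal_iff[OF X] Ph_P by metis

lemma Ph_inner: "Ph t V \<bullet> Ph t W = V \<bullet> W"
proof -
  have "Ph t V \<bullet> Ph t W = (G1 t ** (V ** G2 (- t))) \<bullet> (G1 t ** (W ** G2 (- t)))"
    unfolding Ph_def G2T by (simp add: matrix_mul_assoc)
  also have "\<dots> = (V ** G2 (- t)) \<bullet> (W ** G2 (- t))"
    by (simp add: inner_mm_left G1T G1invr)
  also have "\<dots> = V \<bullet> (W ** (G2 (- t) ** G2 t))"
    by (simp add: inner_mm_right G2T flip: matrix_mul_assoc)
  also have "\<dots> = V \<bullet> W" by (simp add: G2inv)
  finally show ?thesis .
qed

lemma Ph_lin: "Ph t (a *\<^sub>R V + b *\<^sub>R W) = a *\<^sub>R Ph t V + b *\<^sub>R Ph t W"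
  unfolding Ph_def by (simp add: matrix_add_ldistrib mm_add_rdistrib mm_scale_left mm_scale_right)

lemma Ph_inv: "Ph t (Ph (- t) V) = V"
  unfolding Ph_def by (simp add: G1invr G2T G2invr G2inv flip: matrix_mul_assoc)

definition "p1 = xi1 - Om"
definition "p2 = xi2 - Et"

lemma pcomp_eq: "pcomp X (xi1, xi2) = (p1, p2)"
  unfolding pcomp_def p1_def p2_def Om_def Et_def by (simp add: prod_eq_iff)

lemma xit_eq: "xit X (xi1, xi2) t = (G1 t ** p1 ** G1 (- t), G2 t ** p2 ** G2 (- t))"
  unfolding xit_def pcomp_eq G1_def G2_def Om_def[symmetric] Et_def[symmetric] by simp

lemma p_skew: "skew p1" "skew p2"
  unfolding p1_def p2_def using skew_diff s1 s2 hc by auto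

lemma xit_skew: "skew (fst (xit X (xi1, xi2) t))" "skew (snd (xit X (xi1, xi2) t))"
  unfolding xit_eq using p_skew
  by (auto simp: skew_def matrix_transpose_mul G1T G2T matrix_mul_assoc mm_neg_left mm_neg_right)

lemma Ph_f: "Ph t (fmap (p1, p2) U) = fmap (xit X (xi1, xi2) t) (Ph t U)"
  unfolding xit_eq Ph_def fmap_def G2T
  by (simp add: mm_sub_rdistrib mm_sub_ldistrib G1invr G2invr flip: matrix_mul_assoc)

lemma fh_tangent:
  assumes W: "W \<in> tangent_sp X"
  shows "fmap (Om, Et) W \<in> tangent_sp X"
proof -
  let ?M = "transpose X ** W + transpose W ** X"
  have M: "?M = 0" using W unfolding tangent_sp_def by simp
  have T: "transpose X ** Om = Et ** transpose X"
    using hsub_XT(1)[OF X s1 s2, of Om Et] hcomp_in[OF X s1 s2] unfolding Om_def Et_def by simp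
  have "transpose X ** fmap (Om, Et) W + transpose (fmap (Om, Et) W) ** X = Et ** ?M - ?M ** Et"
    unfolding fmap_def using hc(1,2)[unfolded skew_def]
    by (simp add: mmsimps matrix_mul_assoc T hc(3)) (simp add: T hc(3) flip: matrix_mul_assoc)
  then show ?thesis unfolding tangent_sp_def using M by simp
qed

lemma fh_N:
  assumes V: "V \<in> normal_sp X"
  shows "fmap (Om, Et) V \<in> normal_sp X"
  unfolding normal_sp_def
proof (intro CollectI ballI)
  fix W assume W: "W \<in> tangent_sp X"
  have 1: "fmap (Om, Et) V \<bullet> W = - (V \<bullet> fmap (Om, Et) W)"
    by (rule fmap_skew) (simp_all add: hc)
  have 2: "V \<bullet> fmap (Om, Et) W = 0" using V fh_tangent[OF W] unfolding normal_sp_def by blast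
  show "fmap (Om, Et) V \<bullet> W = 0" using 1 2 by simp
qed

definition "Kf W = - Pperp X (fmap (xi1, xi2) W)"

lemma Kf_lin: "linear Kf"
  unfolding Kf_def
  by (intro linear_compose_neg[unfolded o_def] linear_compose[of "fmap (xi1, xi2)" "Pperp X", unfolded o_def]
      linear_fmap bounded_linear.linear[OF bl_Pperp])

definition "E t V = opexp (\<lambda>W. t *\<^sub>R Kf W) V"

lemma Kf_N: "Pperp X (Kf U) = Kf U"
  unfolding Kf_def P_neg using normal_P[OF X P_in_normal] by simp

lemma E_N: "V \<in> normal_sp X \<Longrightarrow> E t V \<in> normal_sp X"
  unfolding E_def normal_iff[OF X]
  by (rule opexp_proj[OF Kf_lin bl_Pperp Kf_N]) (simp add: normal_P[OF X])

lemma E_deriv: "((\<lambda>s. E s V) has_vector_derivative Kf (E s V)) (at s within S)"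
  unfolding E_def by (rule opexp_deriv[OF Kf_lin])

lemma E_zero: "E 0 V = V"
  unfolding E_def using opexp_zero[OF Kf_lin] by simp

lemma E_lin: "E t (a *\<^sub>R V + b *\<^sub>R W) = a *\<^sub>R E t V + b *\<^sub>R E t W"
  unfolding E_def by (rule opexp_lin[OF Kf_lin])

lemma Kf_skew: "V \<in> normal_sp X \<Longrightarrow> W \<in> normal_sp X \<Longrightarrow> Kf V \<bullet> W = - (V \<bullet> Kf W)"
  unfolding Kf_def using Pf_skew[OF X _ _, of "(xi1, xi2)"] s1 s2 by simp

lemma E_inner:
  assumes V: "V \<in> normal_sp X" and W: "W \<in> normal_sp X"
  shows "E t V \<bullet> E t W = V \<bullet> W"
proof -
  let ?h = "\<lambda>s. E s V \<bullet> E s W"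
  have "\<exists>c. \<forall>s\<in>UNIV. ?h s = c"
  proof (rule has_derivative_zero_constant)
    fix s :: real
    have "(?h has_vector_derivative (E s V \<bullet> Kf (E s W) + Kf (E s V) \<bullet> E s W)) (at s within UNIV)"
      by (rule bounded_bilinear.has_vector_derivative[OF bounded_bilinear_inner E_deriv E_deriv])
    moreover have "E s V \<bullet> Kf (E s W) + Kf (E s V) \<bullet> E s W = 0"
      using Kf_skew[OF E_N[OF V] E_N[OF W]] by simp
    ultimately show "(?h has_derivative (\<lambda>h. 0)) (at s within UNIV)"
      by (simp add: has_vector_derivative_def)
  qed simp
  then obtain c where "\<And>s. ?h s = c" by blast
  from this[of t] this[of 0] show ?thesis by (simp add: E_zero)
qed

lemma E_add:
  assumes V: "V \<in> normal_sp X"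
  shows "E s (E t V) = E (s + t) V"
proof -
  have N: "E (s + t) V \<in> normal_sp X \<and> E s (E t V) \<in> normal_sp X" if "s \<in> UNIV" for s
    using E_N V by blast
  have Z: "skew (fst ((\<lambda>_. (xi1, xi2)) s)) \<and> skew (snd ((\<lambda>_. (xi1, xi2)) s))" if "s \<in> UNIV" for s
    using s1 s2 by simp
  have dy: "((\<lambda>s. E (s + t) V) has_vector_derivative - Pperp X (fmap ((\<lambda>_. (xi1, xi2)) s) (E (s + t) V))) (at s within UNIV)"
    if "s \<in> UNIV" for s
  proof -
    have "((\<lambda>s. E s V) \<circ> (\<lambda>s. s + t) has_vector_derivative 1 *\<^sub>R Kf (E (s + t) V)) (at s)"
      by (rule vector_diff_chain_at) (auto intro!: derivative_eq_intros E_deriv)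
    then show ?thesis by (simp add: o_def Kf_def)
  qed
  have dz: "((\<lambda>s. E s (E t V)) has_vector_derivative - Pperp X (fmap ((\<lambda>_. (xi1, xi2)) s) (E s (E t V)))) (at s within UNIV)"
    if "s \<in> UNIV" for s
    using E_deriv[of "E t V" s UNIV] by (simp add: Kf_def)
  have e0: "E (0 + t) V = E 0 (E t V)" by (simp add: E_zero)
  show ?thesis
    using ode_unique[where y = "\<lambda>s. E (s + t) V" and z = "\<lambda>s. E s (E t V)" and Z = "\<lambda>_. (xi1, xi2)",
        OF X convex_UNIV UNIV_I N Z dy dz e0] by simp
qed

lemma E_inv: "W \<in> normal_sp X \<Longrightarrow> E t (E (- t) W) = W"
  using E_add[of W t "- t"] by (simp add: E_zero)


lemma Tsol_form:
  "Phi (mexp (t *\<^sub>R fst (hcomp X (xi1, xi2))), mexp (t *\<^sub>R snd (hcomp X (xi1, xi2))))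
      (opexp (\<lambda>W. - (t *\<^sub>R Pperp X (fmap (xi1, xi2) W))) V) = Ph t (E t V)"
proof -
  have "(\<lambda>W. - (t *\<^sub>R Pperp X (fmap (xi1, xi2) W))) = (\<lambda>W. t *\<^sub>R Kf W)"
    unfolding Kf_def by (rule ext) simp
  then show ?thesis
    unfolding Ph_eq[symmetric] E_def G1_def G2_def Om_def Et_def by simp
qed

lemma G1_deriv: "(G1 has_vector_derivative Om ** G1 s) (at s within S)"
  unfolding G1_def[abs_def] by (rule mexp_deriv)

lemma G2m_deriv: "((\<lambda>s. G2 (- s)) has_vector_derivative (- Et) ** G2 (- s)) (at s within S)"
proof -
  have "(\<lambda>s. G2 (- s)) = (\<lambda>s. mexp (s *\<^sub>R (- Et)))" unfolding G2_def by (rule ext) simp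
  moreover have "G2 (- s) = mexp (s *\<^sub>R (- Et))" unfolding G2_def by simp
  ultimately show ?thesis using mexp_deriv[of "- Et" s S] by simp
qed

lemma fmap_split: "fmap (xi1, xi2) U = fmap (Om, Et) U + fmap (p1, p2) U"
proof -
  have "(xi1, xi2) = (Om, Et) + (p1, p2)" unfolding p1_def p2_def by simp
  then show ?thesis using fmap_add by metis
qed

lemma T_deriv:
  assumes V: "V \<in> normal_sp X"
  shows "((\<lambda>s. Ph s (E s V)) has_vector_derivative - Pperp X (fmap (xit X (xi1, xi2) t) (Ph t (E t V)))) (at t within S)"
proof -
  let ?Y = "E t V" and ?A = "G1 t" and ?B = "G2 (- t)"
  have YN: "?Y \<in> normal_sp X" using E_N V by blast
  have fneq: "(\<lambda>s. Ph s (E s V)) = (\<lambda>s. (G1 s ** E s V) ** G2 (- s))"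
    unfolding Ph_def G2T by simp
  have d1: "((\<lambda>s. G1 s ** E s V) has_vector_derivative ?A ** Kf ?Y + (Om ** ?A) ** ?Y) (at t within S)"
    by (rule bounded_bilinear.has_vector_derivative[OF bb_mm G1_deriv E_deriv])
  have d2: "((\<lambda>s. (G1 s ** E s V) ** G2 (- s)) has_vector_derivative
      (?A ** ?Y) ** ((- Et) ** ?B) + (?A ** Kf ?Y + (Om ** ?A) ** ?Y) ** ?B) (at t within S)"
    by (rule bounded_bilinear.has_vector_derivative[OF bb_mm d1 G2m_deriv])
  let ?Q = "Pperp X (fmap (p1, p2) ?Y)"
  have KY: "Kf ?Y = - fmap (Om, Et) ?Y - ?Q"
    unfolding Kf_def fmap_split P_add normal_P[OF X fh_N[OF YN]] by simp
  have OA: "Om ** ?A = ?A ** Om" unfolding G1_def by (rule mexp_comm)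
  have "(?A ** ?Y) ** ((- Et) ** ?B) + (?A ** Kf ?Y + (Om ** ?A) ** ?Y) ** ?B = - (?A ** ?Q ** ?B)"
    unfolding KY OA fmap_def
    by (simp add: mmsimps flip: matrix_mul_assoc)
  also have "\<dots> = - Ph t ?Q" unfolding Ph_def G2T ..
  also have "\<dots> = - Pperp X (fmap (xit X (xi1, xi2) t) (Ph t ?Y))"
    by (simp add: Ph_P Ph_f)
  finally show ?thesis using d2 unfolding fneq by simp
qed

lemma Ph_zero: "Ph 0 V = V"
  unfolding Ph_def G1_def G2_def by simp

lemma main_ctx:
  assumes I: "is_interval I" and I0: "0 \<in> I"
  shows "is_solution X (xi1, xi2) I (\<lambda>t V. Ph t (E t V))
    \<and> (\<forall>t\<in>I. in_orth_normal X (\<lambda>V. Ph t (E t V)))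
    \<and> (\<forall>T. is_solution X (xi1, xi2) I T \<longrightarrow> (\<forall>t\<in>I. \<forall>V\<in>normal_sp X. T t V = Ph t (E t V)))"
proof (intro conjI allI impI ballI)
  show sol: "is_solution X (xi1, xi2) I (\<lambda>t V. Ph t (E t V))"
    unfolding is_solution_def
    by (auto simp: Ph_N E_N E_lin Ph_lin E_zero Ph_zero T_deriv)
  fix t assume t: "t \<in> I"
  show "in_orth_normal X (\<lambda>V. Ph t (E t V))"
    unfolding in_orth_normal_def
  proof (intro conjI ballI allI)
    show "(\<lambda>V. Ph t (E t V)) ` normal_sp X = normal_sp X"
    proof
      show "(\<lambda>V. Ph t (E t V)) ` normal_sp X \<subseteq> normal_sp X" using Ph_N E_N by blast
      show "normal_sp X \<subseteq> (\<lambda>V. Ph t (E t V)) ` normal_sp X"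
      proof
        fix V assume V: "V \<in> normal_sp X"
        have "E (- t) (Ph (- t) V) \<in> normal_sp X" using V Ph_N E_N by blast
        moreover have "Ph t (E t (E (- t) (Ph (- t) V))) = V"
          using E_inv[OF Ph_N[OF V]] Ph_inv by simp
        ultimately show "V \<in> (\<lambda>V. Ph t (E t V)) ` normal_sp X" by (metis image_eqI)
      qed
    qed
  qed (simp_all add: E_lin Ph_lin Ph_inner E_inner)
next
  fix T t V assume T: "is_solution X (xi1, xi2) I T" and t: "t \<in> I" and V: "V \<in> normal_sp X"
  have N: "T s V \<in> normal_sp X \<and> Ph s (E s V) \<in> normal_sp X" if "s \<in> I" for s
    using T that V Ph_N E_N unfolding is_solution_def by blast
  have Z: "skew (fst (xit X (xi1, xi2) s)) \<and> skew (snd (xit X (xi1, xi2) s))" if "s \<in> I" for s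
    using xit_skew by blast
  have dy: "((\<lambda>s. T s V) has_vector_derivative - Pperp X (fmap (xit X (xi1, xi2) s) (T s V))) (at s within I)"
    if "s \<in> I" for s
    using T that V unfolding is_solution_def by blast
  have dz: "((\<lambda>s. Ph s (E s V)) has_vector_derivative - Pperp X (fmap (xit X (xi1, xi2) s) (Ph s (E s V)))) (at s within I)"
    if "s \<in> I" for s
    using T_deriv[OF V] .
  have e0: "T 0 V = Ph 0 (E 0 V)" using T V unfolding is_solution_def by (simp add: E_zero Ph_zero)
  show "T t V = Ph t (E t V)"
    using ode_unique[where y = "\<lambda>s. T s V" and z = "\<lambda>s. Ph s (E s V)" and Z = "xit X (xi1, xi2)",
        OF X is_interval_convex[OF I] I0 N Z dy dz e0 t] .
qed


end

theorem lemma5p17: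
  fixes X :: "real^'k^'n" and xi1 :: "real^'n^'n" and xi2 :: "real^'k^'k" and I :: "real set"
  assumes "X \<in> stiefel"
    and "skew xi1" and "skew xi2"
    and "is_interval I" and "0 \<in> I"
  defines "Tsol \<equiv> (\<lambda>t V. Phi (mexp (t *\<^sub>R fst (hcomp X (xi1, xi2))), mexp (t *\<^sub>R snd (hcomp X (xi1, xi2))))
                    (opexp (\<lambda>W. - (t *\<^sub>R Pperp X (fmap (xi1, xi2) W))) V))"
  shows "is_solution X (xi1, xi2) I Tsol
    \<and> (\<forall>t\<in>I. in_orth_normal X (Tsol t))
    \<and> (\<forall>T. is_solution X (xi1, xi2) I T \<longrightarrow> (\<forall>t\<in>I. \<forall>V\<in>normal_sp X. T t V = Tsol t V))"
proof -
  have "Tsol = (\<lambda>t V. Ph X xi1 xi2 t (E X xi1 xi2 t V))"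
    unfolding Tsol_def by (intro ext) (rule Tsol_form[OF assms(1-3)])
  then show ?thesis using main_ctx[OF assms(1-5)] by simp
qed

end
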